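(* Let $M$ be a partial multiplication matrix, and let $\pi^\#$ be an $M$-indivisible $M$-gridded permutation with more than one point. Then there is a cycle of the row-column graph $G_M$ such that every cell corresponding to an edge of this cycle is non-empty in $\pi^\#$, and the gridded subpermutation of $\pi^\#$ consisting of the last point of each of these cells is $M$-indivisible.
   Context: A gridding matrix has entries in $\{0,1,-1\}$; an $m\times n$ one has $m$ columns, $n$ rows, $M_{ij}$ in column $i$ from the left and row $j$ from the bottom. An $M$-gridding of a permutation $\pi$ of length $L$ is a choice of vertical lines $\tfrac12=v_0\le\dots\le v_m=L+\tfrac12$ and horizontal lines $\tfrac12=h_0\le\dots\le h_n=L+\tfrac12$, not through points of $\pi$, such that in each cell $C_{ij}=\{v_{i-1}<x<v_i,\ h_{j-1}<y<h_j\}$ the points of $\pi$ are absent if $M_{ij}=0$, increasing if $M_{ij}=1$, decreasing if $M_{ij}=-1$; the result is an $M$-gridded permutation. The row-column graph $G_M$ is the bipartite graph on $\{1,\dots,m\}\cup\{1',\dots,n'\}$ with edge $ij'$ iff $M_{ij}\ne0$; cell $(i,j)$ corresponds to edge $ij'$. $M$ is a partial multiplication matrix: there are fixed $c_1,\dots,c_m,r_1,\dots,r_n\in\{\pm1\}$ with $M_{ij}=c_ir_j$ for each non-zero entry. Column $i$ is oriented left-to-right if $c_i=1$, right-to-left otherwise; row $j$ bottom-to-top if $r_j=1$, top-to-bottom otherwise. The points in a non-zero cell $(i,j)$ are thereby linearly ordered (consistently with both the column and row orientations); the last point of the cell is the final one in this order. $M$-sum: for $M$-gridded $\sigma^\#,\tau^\#$,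 $\sigma^\#\boxplus\tau^\#$ is the $M$-gridded permutation whose points are those of $\sigma^\#$ and $\tau^\#$, each in the cell it occupied, with the relative order among points of $\sigma^\#$ and among points of $\tau^\#$ unchanged, and such that in every column of cells all points of $\sigma^\#$ precede all points of $\tau^\#$ in the column's orientation and in every row of cells all points of $\sigma^\#$ precede all points of $\tau^\#$ in the row's orientation. An $M$-gridded permutation is $M$-divisible if it equals $\sigma^\#\boxplus\tau^\#$ with $\sigma^\#,\tau^\#$ non-empty, and $M$-indivisible otherwise. A gridded subpermutation inherits the cells of the points it keeps. *)

theory Defs
  imports Main "HOL.Real"
begin

text \<open>Gridding matrices are functions M :: nat => nat => int, used on columns 1..m
  and rows 1..n.  A gridded permutation is a triple (P, v, h): a finite set P of points
  in general position (distinct x- and distinct y-coordinates; only the relative order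
  matters) together with vertical lines v 0 .. v m and horizontal lines h 0 .. h n.\<close>

type_synonym gperm = "(nat \<times> nat) set \<times> (nat \<Rightarrow> real) \<times> (nat \<Rightarrow> real)"

definition gpts :: "gperm \<Rightarrow> (nat \<times> nat) set" where
  "gpts G = fst G"

definition incol :: "gperm \<Rightarrow> nat \<Rightarrow> nat \<times> nat \<Rightarrow> bool" where
  "incol G i p \<longleftrightarrow> p \<in> gpts G \<and> 1 \<le> i \<and>
     fst (snd G) (i - 1) < real (fst p) \<and> real (fst p) < fst (snd G) i"

definition inrow :: "gperm \<Rightarrow> nat \<Rightarrow> nat \<times> nat \<Rightarrow> bool" where
  "inrow G j p \<longleftrightarrow> p \<in> gpts G \<and> 1 \<le> j \<and>
     snd (snd G) (j - 1) < real (snd p) \<and> real (snd p) < snd (snd G) j"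

definition incell :: "gperm \<Rightarrow> nat \<Rightarrow> nat \<Rightarrow> nat \<times> nat \<Rightarrow> bool" where
  "incell G i j p \<longleftrightarrow> incol G i p \<and> inrow G j p"

definition gridded :: "(nat \<Rightarrow> nat \<Rightarrow> int) \<Rightarrow> nat \<Rightarrow> nat \<Rightarrow> gperm \<Rightarrow> bool" where
  "gridded M m n G \<longleftrightarrow>
     (let P = gpts G; v = fst (snd G); h = snd (snd G) in
       finite P \<and> inj_on fst P \<and> inj_on snd P \<and>
       (\<forall>k<m. v k \<le> v (Suc k)) \<and> (\<forall>k<n. h k \<le> h (Suc k)) \<and>
       (\<forall>p\<in>P. v 0 < real (fst p) \<and> real (fst p) < v m \<and>
                h 0 < real (snd p) \<and> real (snd p) < h n \<and>
                (\<forall>k\<le>m. real (fst p) \<noteq> v k) \<and> (\<forall>k\<le>n. real (snd p) \<noteq> h k)) \<and>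
       (\<forall>i\<in>{1..m}. \<forall>j\<in>{1..n}.
          (M i j = 0 \<longrightarrow> (\<forall>p. \<not> incell G i j p)) \<and>
          (M i j = 1 \<longrightarrow> (\<forall>p q. incell G i j p \<and> incell G i j q \<and> fst p < fst q
                                 \<longrightarrow> snd p < snd q)) \<and>
          (M i j = -1 \<longrightarrow> (\<forall>p q. incell G i j p \<and> incell G i j q \<and> fst p < fst q
                                 \<longrightarrow> snd p > snd q))))"

definition gridding_matrix :: "(nat \<Rightarrow> nat \<Rightarrow> int) \<Rightarrow> nat \<Rightarrow> nat \<Rightarrow> bool" where
  "gridding_matrix M m n \<longleftrightarrow> (\<forall>i\<in>{1..m}. \<forall>j\<in>{1..n}. M i j \<in> {0, 1, -1})"

definition pmm_witness :: "(nat \<Rightarrow> nat \<Rightarrow> int) \<Rightarrow> nat \<Rightarrow> nat \<Rightarrow> (nat \<Rightarrow> int) \<Rightarrow> (nat \<Rightarrow> int) \<Rightarrow> bool" where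
  "pmm_witness M m n c r \<longleftrightarrow>
     (\<forall>i\<in>{1..m}. c i \<in> {1, -1}) \<and> (\<forall>j\<in>{1..n}. r j \<in> {1, -1}) \<and>
     (\<forall>i\<in>{1..m}. \<forall>j\<in>{1..n}. M i j \<noteq> 0 \<longrightarrow> M i j = c i * r j)"

definition col_before :: "(nat \<Rightarrow> int) \<Rightarrow> nat \<Rightarrow> nat \<times> nat \<Rightarrow> nat \<times> nat \<Rightarrow> bool" where
  "col_before c i p q \<longleftrightarrow> (if c i = 1 then fst p < fst q else fst q < fst p)"

definition row_before :: "(nat \<Rightarrow> int) \<Rightarrow> nat \<Rightarrow> nat \<times> nat \<Rightarrow> nat \<times> nat \<Rightarrow> bool" where
  "row_before r j p q \<longleftrightarrow> (if r j = 1 then snd p < snd q else snd q < snd p)"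

definition restr :: "gperm \<Rightarrow> (nat \<times> nat) set \<Rightarrow> gperm" where
  "restr G S = (gpts G \<inter> S, snd G)"

text \<open>Two gridded permutations are the same gridded permutation iff there is an
  order isomorphism of their points preserving cells.\<close>
definition gp_iso :: "nat \<Rightarrow> nat \<Rightarrow> gperm \<Rightarrow> gperm \<Rightarrow> bool" where
  "gp_iso m n G H \<longleftrightarrow> (\<exists>f. bij_betw f (gpts G) (gpts H) \<and>
     (\<forall>p\<in>gpts G. \<forall>q\<in>gpts G. (fst p < fst q \<longleftrightarrow> fst (f p) < fst (f q)) \<and>
                               (snd p < snd q \<longleftrightarrow> snd (f p) < snd (f q))) \<and>
     (\<forall>p\<in>gpts G. \<forall>i\<in>{1..m}. \<forall>j\<in>{1..n}. incell G i j p \<longleftrightarrow> incell H i j (f p)))"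

definition is_Msum :: "nat \<Rightarrow> nat \<Rightarrow> (nat \<Rightarrow> int) \<Rightarrow> (nat \<Rightarrow> int) \<Rightarrow> gperm \<Rightarrow> gperm \<Rightarrow> gperm \<Rightarrow> bool" where
  "is_Msum m n c r Pi Sg Tg \<longleftrightarrow>
     (\<exists>S T. S \<union> T = gpts Pi \<and> S \<inter> T = {} \<and>
        gp_iso m n (restr Pi S) Sg \<and> gp_iso m n (restr Pi T) Tg \<and>
        (\<forall>s\<in>S. \<forall>t\<in>T.
           (\<forall>i\<in>{1..m}. incol Pi i s \<and> incol Pi i t \<longrightarrow> col_before c i s t) \<and>
           (\<forall>j\<in>{1..n}. inrow Pi j s \<and> inrow Pi j t \<longrightarrow> row_before r j s t)))"

definition M_divisible :: "(nat \<Rightarrow> nat \<Rightarrow> int) \<Rightarrow> nat \<Rightarrow> nat \<Rightarrow> (nat \<Rightarrow> int) \<Rightarrow> (nat \<Rightarrow> int) \<Rightarrow> gperm \<Rightarrow> bool" where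
  "M_divisible M m n c r Pi \<longleftrightarrow>
     (\<exists>Sg Tg. gridded M m n Sg \<and> gridded M m n Tg \<and>
        gpts Sg \<noteq> {} \<and> gpts Tg \<noteq> {} \<and> is_Msum m n c r Pi Sg Tg)"

definition M_indivisible :: "(nat \<Rightarrow> nat \<Rightarrow> int) \<Rightarrow> nat \<Rightarrow> nat \<Rightarrow> (nat \<Rightarrow> int) \<Rightarrow> (nat \<Rightarrow> int) \<Rightarrow> gperm \<Rightarrow> bool" where
  "M_indivisible M m n c r Pi \<longleftrightarrow> \<not> M_divisible M m n c r Pi"

text \<open>Row-column graph: vertices Inl i (column i, 1..m) and Inr j (row j', 1..n).\<close>
definition rc_adj :: "(nat \<Rightarrow> nat \<Rightarrow> int) \<Rightarrow> nat \<Rightarrow> nat \<Rightarrow> nat + nat \<Rightarrow> nat + nat \<Rightarrow> bool" where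
  "rc_adj M m n x y \<longleftrightarrow>
     (\<exists>i\<in>{1..m}. \<exists>j\<in>{1..n}. M i j \<noteq> 0 \<and>
        ((x = Inl i \<and> y = Inr j) \<or> (x = Inr j \<and> y = Inl i)))"

definition rc_cycle :: "(nat \<Rightarrow> nat \<Rightarrow> int) \<Rightarrow> nat \<Rightarrow> nat \<Rightarrow> (nat + nat) list \<Rightarrow> bool" where
  "rc_cycle M m n vs \<longleftrightarrow> length vs \<ge> 3 \<and> distinct vs \<and>
     (\<forall>k<length vs. rc_adj M m n (vs ! k) (vs ! ((k + 1) mod length vs)))"

definition cycle_cells :: "(nat + nat) list \<Rightarrow> (nat \<times> nat) set" where
  "cycle_cells vs = {(i, j). \<exists>k<length vs.
      {vs ! k, vs ! ((k + 1) mod length vs)} = {Inl i, Inr j}}"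

text \<open>p is the last point of cell (i,j) (w.r.t. the column orientation, which is
  consistent with the row orientation in a non-zero cell).\<close>
definition last_in_cell :: "(nat \<Rightarrow> int) \<Rightarrow> gperm \<Rightarrow> nat \<Rightarrow> nat \<Rightarrow> nat \<times> nat \<Rightarrow> bool" where
  "last_in_cell c G i j p \<longleftrightarrow> incell G i j p \<and>
     (\<forall>q. incell G i j q \<and> q \<noteq> p \<longrightarrow> col_before c i q p)"

end

theory Submission
  imports Defs
begin

lemma incol_restr: "incol (restr G S) i p \<longleftrightarrow> incol G i p \<and> p \<in> S"
  by (auto simp: incol_def restr_def gpts_def)
lemma inrow_restr: "inrow (restr G S) i p \<longleftrightarrow> inrow G i p \<and> p \<in> S"
  by (auto simp: inrow_def restr_def gpts_def)
lemma incell_restr: "incell (restr G S) i j p \<longleftrightarrow> incell G i j p \<and> p \<in> S"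
  by (auto simp: incell_def incol_restr inrow_restr)
lemma gpts_restr: "gpts (restr G S) = gpts G \<inter> S"
  by (simp add: restr_def gpts_def)
lemma lines_restr: "snd (restr G S) = snd G"
  by (simp add: restr_def)

lemma gridded_restr:
  assumes "gridded M m n G" shows "gridded M m n (restr G S)"
proof -
  let ?P = "gpts G" and ?v = "fst (snd G)" and ?h = "snd (snd G)"
  have a0: "(finite ?P) \<and>
    (inj_on fst ?P) \<and>
    (inj_on snd ?P) \<and>
    (\<forall>k<m. ?v k \<le> ?v (Suc k)) \<and>
    (\<forall>k<n. ?h k \<le> ?h (Suc k)) \<and>
    (\<forall>p\<in>?P. ?v 0 < real (fst p) \<and> real (fst p) < ?v m \<and>
                ?h 0 < real (snd p) \<and> real (snd p) < ?h n \<and>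
                (\<forall>k\<le>m. real (fst p) \<noteq> ?v k) \<and> (\<forall>k\<le>n. real (snd p) \<noteq> ?h k)) \<and>
    (\<forall>i\<in>{1..m}. \<forall>j\<in>{1..n}.
          (M i j = 0 \<longrightarrow> (\<forall>p. \<not> incell G i j p)) \<and>
          (M i j = 1 \<longrightarrow> (\<forall>p q. incell G i j p \<and> incell G i j q \<and> fst p < fst q
                                 \<longrightarrow> snd p < snd q)) \<and>
          (M i j = -1 \<longrightarrow> (\<forall>p q. incell G i j p \<and> incell G i j q \<and> fst p < fst q
                                 \<longrightarrow> snd p > snd q)))"
    using assms unfolding gridded_def Let_def by assumption
  have a1: "finite ?P"
    using a0 by (elim conjE)
  have a2: "inj_on fst ?P"
    using a0 by (elim conjE)
  have a3: "inj_on snd ?P"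
    using a0 by (elim conjE)
  have a4: "\<forall>k<m. ?v k \<le> ?v (Suc k)"
    using a0 by (elim conjE)
  have a5: "\<forall>k<n. ?h k \<le> ?h (Suc k)"
    using a0 by (elim conjE)
  have a6: "\<forall>p\<in>?P. ?v 0 < real (fst p) \<and> real (fst p) < ?v m \<and>
                ?h 0 < real (snd p) \<and> real (snd p) < ?h n \<and>
                (\<forall>k\<le>m. real (fst p) \<noteq> ?v k) \<and> (\<forall>k\<le>n. real (snd p) \<noteq> ?h k)"
    using a0 by (elim conjE)
  have a7: "\<forall>i\<in>{1..m}. \<forall>j\<in>{1..n}.
          (M i j = 0 \<longrightarrow> (\<forall>p. \<not> incell G i j p)) \<and>
          (M i j = 1 \<longrightarrow> (\<forall>p q. incell G i j p \<and> incell G i j q \<and> fst p < fst q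
                                 \<longrightarrow> snd p < snd q)) \<and>
          (M i j = -1 \<longrightarrow> (\<forall>p q. incell G i j p \<and> incell G i j q \<and> fst p < fst q
                                 \<longrightarrow> snd p > snd q))"
    using a0 by (elim conjE)
  note a = a1 a2 a3 a4 a5 a6 a7
  have b: "finite (?P \<inter> S)" "inj_on fst (?P \<inter> S)" "inj_on snd (?P \<inter> S)"
    using a(1-3) by (auto intro: inj_on_subset)
  have c: "\<forall>p\<in>?P \<inter> S. ?v 0 < real (fst p) \<and> real (fst p) < ?v m \<and>
                ?h 0 < real (snd p) \<and> real (snd p) < ?h n \<and>
                (\<forall>k\<le>m. real (fst p) \<noteq> ?v k) \<and> (\<forall>k\<le>n. real (snd p) \<noteq> ?h k)"
    using a(6) by blast
  have d: "\<forall>i\<in>{1..m}. \<forall>j\<in>{1..n}.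
          (M i j = 0 \<longrightarrow> (\<forall>p. \<not> (incell G i j p \<and> p \<in> S))) \<and>
          (M i j = 1 \<longrightarrow> (\<forall>p q. (incell G i j p \<and> p \<in> S) \<and> (incell G i j q \<and> q \<in> S) \<and> fst p < fst q
                                 \<longrightarrow> snd p < snd q)) \<and>
          (M i j = -1 \<longrightarrow> (\<forall>p q. (incell G i j p \<and> p \<in> S) \<and> (incell G i j q \<and> q \<in> S) \<and> fst p < fst q
                                 \<longrightarrow> snd p > snd q))"
    using a(7) by blast
  show ?thesis
    unfolding gridded_def Let_def gpts_restr lines_restr incell_restr
    apply (intro conjI)
    apply (rule b(1))
    apply (rule b(2))
    apply (rule b(3))
    apply (rule a(4))
    apply (rule a(5))
    apply (rule c)
    apply (rule d)
    done
qed

lemma gp_iso_refl: "gp_iso m n G G"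
  unfolding gp_iso_def by (rule exI[of _ id]) auto

lemma col_before_asym: "col_before c i p q \<Longrightarrow> \<not> col_before c i q p"
  by (auto simp: col_before_def split: if_splits)
lemma row_before_asym: "row_before c i p q \<Longrightarrow> \<not> row_before c i q p"
  by (auto simp: row_before_def split: if_splits)

lemma finite_max_rel:
  assumes "finite A" "A \<noteq> {}"
    and tr: "\<And>x y z. x \<in> A \<Longrightarrow> y \<in> A \<Longrightarrow> z \<in> A \<Longrightarrow> R x y \<Longrightarrow> R y z \<Longrightarrow> R x z"
    and tot: "\<And>x y. x \<in> A \<Longrightarrow> y \<in> A \<Longrightarrow> x \<noteq> y \<Longrightarrow> R x y \<or> R y x"
  shows "\<exists>p\<in>A. \<forall>q\<in>A. q \<noteq> p \<longrightarrow> R q p"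
  using assms(1,2) tr tot
proof (induction A rule: finite_ne_induct)
  case (singleton x) show ?case by simp
next
  case (insert a F)
  note tr1 = insert.prems(1) and tot1 = insert.prems(2)
  have trF: "R x z" if "x \<in> F" "y \<in> F" "z \<in> F" "R x y" "R y z" for x y z
    using tr1[of x y z] that by simp
  have totF: "R x y \<or> R y x" if "x \<in> F" "y \<in> F" "x \<noteq> y" for x y
    using tot1[of x y] that by simp
  have ex: "\<exists>p\<in>F. \<forall>q\<in>F. q \<noteq> p \<longrightarrow> R q p" by (rule insert.IH[OF trF totF])
  then obtain p where p: "p \<in> F" "\<forall>q\<in>F. q \<noteq> p \<longrightarrow> R q p" by (elim bexE) 
  have pa: "p \<noteq> a" using p(1) insert.hyps(3) by metis
  show ?case
  proof (cases "R p a")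
    case True
    have "\<forall>q\<in>insert a F. q \<noteq> a \<longrightarrow> R q a"
    proof (intro ballI impI)
      fix q assume q: "q \<in> insert a F" "q \<noteq> a"
      then have qF: "q \<in> F" by simp
      show "R q a"
      proof (cases "q = p")
        case True then show ?thesis using \<open>R p a\<close> by simp
      next
        case False
        then have "R q p" using p(2) qF by simp
        then show ?thesis using tr1[of q p a] qF p(1) \<open>R p a\<close> by simp
      qed
    qed
    then show ?thesis by blast
  next
    case False
    then have "R a p" using tot1[of a p] p(1) pa by simp
    then have "\<forall>q\<in>insert a F. q \<noteq> p \<longrightarrow> R q p" using p(2) by simp
    then show ?thesis using p(1) by blast
  qed
qed

lemma mono_le:
  fixes v :: "nat \<Rightarrow> real"
  assumes "\<forall>k<m. v k \<le> v (Suc k)" "a \<le> b" "b \<le> m" shows "v a \<le> v b"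
  using assms(2,3)
proof (induction b)
  case 0 then show ?case by simp
next
  case (Suc b)
  show ?case
  proof (cases "a = Suc b")
    case True then show ?thesis by simp
  next
    case False
    then have "a \<le> b" "b < m" using Suc.prems by auto
    then have "v a \<le> v b" "v b \<le> v (Suc b)" using Suc.IH assms(1) by auto
    then show ?thesis by linarith
  qed
qed

lemma exists_line:
  fixes v :: "nat \<Rightarrow> real"
  assumes "v 0 < x" "x < v m" "\<forall>k\<le>m. x \<noteq> v k"
  shows "\<exists>i\<in>{1..m}. v (i - 1) < x \<and> x < v i"
proof -
  define i where "i = (LEAST k. x < v k)"
  have xi: "x < v i" unfolding i_def by (rule LeastI[of _ m]) (rule assms(2))
  have im: "i \<le> m" unfolding i_def by (rule Least_le) (rule assms(2))
  have i0: "i \<noteq> 0" using xi assms(1) by (metis less_asym)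
  have "\<not> x < v (i - 1)"
  proof
    assume h: "x < v (i - 1)"
    have "(LEAST k. x < v k) \<le> i - 1" by (rule Least_le) (rule h)
    then have "i \<le> i - 1" by (simp only: i_def)
    then show False using i0 by linarith
  qed
  moreover have "x \<noteq> v (i - 1)" using assms(3) im by auto
  ultimately show ?thesis using xi im i0 by (intro bexI[of _ i]) auto
qed

lemma unique_line:
  fixes v :: "nat \<Rightarrow> real"
  assumes "\<forall>k<m. v k \<le> v (Suc k)" "i \<in> {1..m}" "i' \<in> {1..m}"
    "v (i - 1) < x" "x < v i" "v (i' - 1) < x" "x < v i'"
  shows "i = i'"
proof (rule ccontr)
  assume "i \<noteq> i'"
  then consider "i < i'" | "i' < i" by linarith
  then show False
  proof cases
    case 1
    then have "v i \<le> v (i' - 1)" using assms by (intro mono_le) auto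
    then show ?thesis using assms by linarith
  next
    case 2
    then have "v i' \<le> v (i - 1)" using assms by (intro mono_le) auto
    then show ?thesis using assms by linarith
  qed
qed


locale lctx =
  fixes M :: "nat \<Rightarrow> nat \<Rightarrow> int" and m n :: nat and c r :: "nat \<Rightarrow> int" and Pi :: gperm
  assumes pmm: "pmm_witness M m n c r"
    and grid: "gridded M m n Pi"
    and indiv: "M_indivisible M m n c r Pi"
    and card2: "card (gpts Pi) > 1"
begin

definition online :: "nat + nat \<Rightarrow> nat \<times> nat \<Rightarrow> bool" where
  "online x p = (case x of Inl i \<Rightarrow> i \<in> {1..m} \<and> incol Pi i p | Inr j \<Rightarrow> j \<in> {1..n} \<and> inrow Pi j p)"
definition bef :: "nat + nat \<Rightarrow> nat \<times> nat \<Rightarrow> nat \<times> nat \<Rightarrow> bool" where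
  "bef x p q = (case x of Inl i \<Rightarrow> col_before c i p q | Inr j \<Rightarrow> row_before r j p q)"
definition islast :: "nat + nat \<Rightarrow> nat \<times> nat \<Rightarrow> bool" where
  "islast x p = (online x p \<and> (\<forall>q. online x q \<and> q \<noteq> p \<longrightarrow> bef x q p))"
definition lastp :: "nat + nat \<Rightarrow> nat \<times> nat" where
  "lastp x = (SOME p. islast x p)"
definition good :: "nat + nat \<Rightarrow> bool" where
  "good x = (\<exists>p. online x p)"
definition g :: "nat + nat \<Rightarrow> nat + nat" where
  "g x = (case x of Inl i \<Rightarrow> Inr (SOME j. j \<in> {1..n} \<and> inrow Pi j (lastp x))
                   | Inr j \<Rightarrow> Inl (SOME i. i \<in> {1..m} \<and> incol Pi i (lastp x)))"

abbreviation "P \<equiv> gpts Pi"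

lemma gall: "(finite P) \<and>
  (inj_on fst P) \<and>
  (inj_on snd P) \<and>
  (\<forall>k<m. fst (snd Pi) k \<le> fst (snd Pi) (Suc k)) \<and>
  (\<forall>k<n. snd (snd Pi) k \<le> snd (snd Pi) (Suc k)) \<and>
  (\<forall>p\<in>P. fst (snd Pi) 0 < real (fst p) \<and> real (fst p) < fst (snd Pi) m \<and>
                snd (snd Pi) 0 < real (snd p) \<and> real (snd p) < snd (snd Pi) n \<and>
                (\<forall>k\<le>m. real (fst p) \<noteq> fst (snd Pi) k) \<and> (\<forall>k\<le>n. real (snd p) \<noteq> snd (snd Pi) k)) \<and>
  (\<forall>i\<in>{1..m}. \<forall>j\<in>{1..n}.
          (M i j = 0 \<longrightarrow> (\<forall>p. \<not> incell Pi i j p)) \<and>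
          (M i j = 1 \<longrightarrow> (\<forall>p q. incell Pi i j p \<and> incell Pi i j q \<and> fst p < fst q
                                 \<longrightarrow> snd p < snd q)) \<and>
          (M i j = -1 \<longrightarrow> (\<forall>p q. incell Pi i j p \<and> incell Pi i j q \<and> fst p < fst q
                                 \<longrightarrow> snd p > snd q)))"
  using grid unfolding gridded_def Let_def by assumption

lemma finP: "finite P"
  using gall by (elim conjE) assumption
lemma injx: "inj_on fst P"
  using gall by (elim conjE) assumption
lemma injy: "inj_on snd P"
  using gall by (elim conjE) assumption
lemma vmono: "\<forall>k<m. fst (snd Pi) k \<le> fst (snd Pi) (Suc k)"
  using gall by (elim conjE) assumption
lemma hmono: "\<forall>k<n. snd (snd Pi) k \<le> snd (snd Pi) (Suc k)"
  using gall by (elim conjE) assumption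
lemma bnds: "\<forall>p\<in>P. fst (snd Pi) 0 < real (fst p) \<and> real (fst p) < fst (snd Pi) m \<and>
                snd (snd Pi) 0 < real (snd p) \<and> real (snd p) < snd (snd Pi) n \<and>
                (\<forall>k\<le>m. real (fst p) \<noteq> fst (snd Pi) k) \<and> (\<forall>k\<le>n. real (snd p) \<noteq> snd (snd Pi) k)"
  using gall by (elim conjE) assumption
lemma cells: "\<forall>i\<in>{1..m}. \<forall>j\<in>{1..n}.
          (M i j = 0 \<longrightarrow> (\<forall>p. \<not> incell Pi i j p)) \<and>
          (M i j = 1 \<longrightarrow> (\<forall>p q. incell Pi i j p \<and> incell Pi i j q \<and> fst p < fst q
                                 \<longrightarrow> snd p < snd q)) \<and>
          (M i j = -1 \<longrightarrow> (\<forall>p q. incell Pi i j p \<and> incell Pi i j q \<and> fst p < fst q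
                                 \<longrightarrow> snd p > snd q))"
  using gall by (elim conjE) assumption

lemma online_P: "online x p \<Longrightarrow> p \<in> P"
  by (auto simp: online_def incol_def inrow_def split: sum.splits)

lemma bef_asym: "bef x p q \<Longrightarrow> \<not> bef x q p"
  by (auto simp: bef_def col_before_def row_before_def split: sum.splits if_splits)

lemma bef_trans: "bef x p q \<Longrightarrow> bef x q s \<Longrightarrow> bef x p s"
  by (auto simp: bef_def col_before_def row_before_def split: sum.splits if_splits)

lemma bef_total: "online x p \<Longrightarrow> online x q \<Longrightarrow> p \<noteq> q \<Longrightarrow> bef x p q \<or> bef x q p"
proof -
  assume a: "online x p" "online x q" "p \<noteq> q"
  then have "p \<in> P" "q \<in> P" using online_P by auto
  then have "fst p \<noteq> fst q" "snd p \<noteq> snd q" using a(3) injx injy by (auto dest: inj_onD)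
  then show ?thesis by (auto simp: bef_def col_before_def row_before_def split: sum.splits)
qed

lemma last_exists: "good x \<Longrightarrow> islast x (lastp x)"
proof -
  assume "good x"
  have "\<exists>p\<in>{p. online x p}. \<forall>q\<in>{p. online x p}. q \<noteq> p \<longrightarrow> bef x q p"
  proof (rule finite_max_rel)
    show "finite {p. online x p}" using finP online_P by (metis mem_Collect_eq rev_finite_subset subsetI)
    show "{p. online x p} \<noteq> {}" using \<open>good x\<close> by (auto simp: good_def)
  qed (use bef_trans bef_total in blast)+
  then have "\<exists>p. islast x p" by (auto simp: islast_def)
  then show ?thesis unfolding lastp_def by (rule someI_ex)
qed

lemma col_exists: "p \<in> P \<Longrightarrow> \<exists>i\<in>{1..m}. incol Pi i p"
  using exists_line[of "fst (snd Pi)" "real (fst p)" m] bnds by (auto simp: incol_def)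
lemma row_exists: "p \<in> P \<Longrightarrow> \<exists>j\<in>{1..n}. inrow Pi j p"
  using exists_line[of "snd (snd Pi)" "real (snd p)" n] bnds by (auto simp: inrow_def)

lemma col_unique: assumes "i \<in> {1..m}" "i' \<in> {1..m}" "incol Pi i p" "incol Pi i' p" shows "i = i'"
proof -
  have "fst (snd Pi) (i - 1) < real (fst p)" "real (fst p) < fst (snd Pi) i"
    "fst (snd Pi) (i' - 1) < real (fst p)" "real (fst p) < fst (snd Pi) i'"
    using assms(3,4) by (simp_all add: incol_def)
  then show ?thesis using unique_line[OF vmono assms(1,2)] by blast
qed
lemma row_unique: assumes "j \<in> {1..n}" "j' \<in> {1..n}" "inrow Pi j p" "inrow Pi j' p" shows "j = j'"
proof -
  have "snd (snd Pi) (j - 1) < real (snd p)" "real (snd p) < snd (snd Pi) j"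
    "snd (snd Pi) (j' - 1) < real (snd p)" "real (snd p) < snd (snd Pi) j'"
    using assms(3,4) by (simp_all add: inrow_def)
  then show ?thesis using unique_line[OF hmono assms(1,2)] by blast
qed


lemma same_side: assumes o1: "online x p" and o2: "online y p" and s: "isl x = isl y"
  shows "x = y"
proof (cases x)
  case (Inl i)
  then obtain i' where y: "y = Inl i'" using s by (cases y) auto
  have "i \<in> {1..m}" "incol Pi i p" using o1 Inl by (simp_all add: online_def)
  moreover have "i' \<in> {1..m}" "incol Pi i' p" using o2 y by (simp_all add: online_def)
  ultimately have "i = i'" using col_unique by blast
  then show ?thesis using Inl y by simp
next
  case (Inr j)
  then obtain j' where y: "y = Inr j'" using s by (cases y) auto
  have "j \<in> {1..n}" "inrow Pi j p" using o1 Inr by (simp_all add: online_def)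
  moreover have "j' \<in> {1..n}" "inrow Pi j' p" using o2 y by (simp_all add: online_def)
  ultimately have "j = j'" using row_unique by blast
  then show ?thesis using Inr y by simp
qed

lemma g_facts: assumes "good x"
  shows "online (g x) (lastp x)" "isl (g x) \<noteq> isl x" "good (g x)" "online x (lastp x)"
proof -
  have l: "online x (lastp x)" using last_exists[OF assms] by (simp add: islast_def)
  then have P: "lastp x \<in> P" by (rule online_P)
  show "online (g x) (lastp x)"
  proof (cases x)
    case (Inl i)
    have "\<exists>j. j \<in> {1..n} \<and> inrow Pi j (lastp x)" using row_exists[OF P] by blast
    note someI_ex[OF this]
    then show ?thesis using Inl by (simp add: g_def online_def)
  next
    case (Inr j)
    have "\<exists>i. i \<in> {1..m} \<and> incol Pi i (lastp x)" using col_exists[OF P] by blast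
    note someI_ex[OF this]
    then show ?thesis using Inr by (simp add: g_def online_def)
  qed
  then show "good (g x)" unfolding good_def by blast
  show "isl (g x) \<noteq> isl x" by (auto simp: g_def split: sum.splits)
  show "online x (lastp x)" by (rule l)
qed

lemma online_cases: "good x \<Longrightarrow> online y (lastp x) \<Longrightarrow> y = x \<or> y = g x"
proof -
  assume gx: "good x" and o: "online y (lastp x)"
  show "y = x \<or> y = g x"
  proof (cases "isl y = isl x")
    case True
    then have "y = x" using same_side[OF o g_facts(4)[OF gx]] by simp
    then show ?thesis by simp
  next
    case False
    then have "isl y = isl (g x)" using g_facts(2)[OF gx] by (cases "isl y"; cases "isl x") auto
    then have "y = g x" using same_side[OF o g_facts(1)[OF gx]] by simp
    then show ?thesis by simp
  qed
qed


lemma in_edge: assumes pP: "p \<in> P"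
  shows "\<exists>y q. online y p \<and> online y q \<and> q \<noteq> p \<and> bef y p q"
proof (rule ccontr)
  assume na: "\<not> ?thesis"
  define S where "S = P - {p}"
  have SP: "S \<union> {p} = P" "S \<inter> {p} = {}" using pP by (auto simp: S_def)
  have "S \<noteq> {}"
  proof
    assume "S = {}"
    then have "P \<subseteq> {p}" by (auto simp: S_def)
    then have "card P \<le> card {p}" by (intro card_mono) simp_all
    then have "card P \<le> 1" by simp
    then show False using card2 by simp
  qed
  have "M_divisible M m n c r Pi"
    unfolding M_divisible_def
  proof (intro exI conjI)
    show "gridded M m n (restr Pi S)" "gridded M m n (restr Pi {p})" by (rule gridded_restr[OF grid])+
    show "gpts (restr Pi S) \<noteq> {}" using \<open>S \<noteq> {}\<close> by (simp add: gpts_restr S_def Int_absorb1)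
    show "gpts (restr Pi {p}) \<noteq> {}" using pP by (simp add: gpts_restr)
    show "is_Msum m n c r Pi (restr Pi S) (restr Pi {p})"
      unfolding is_Msum_def
    proof (intro exI conjI ballI impI)
      show "S \<union> {p} = P" "S \<inter> {p} = {}" by (fact SP)+
      show "gp_iso m n (restr Pi S) (restr Pi S)" "gp_iso m n (restr Pi {p}) (restr Pi {p})"
        by (rule gp_iso_refl)+
    next
      fix s t i assume st: "s \<in> S" "t \<in> {p}" "i \<in> {1..m}" "incol Pi i s \<and> incol Pi i t"
      then have o: "online (Inl i) s" "online (Inl i) p" "s \<noteq> p" by (auto simp: online_def S_def)
      then have "\<not> bef (Inl i) p s" using na by blast
      then have "bef (Inl i) s p" using bef_total[OF o] by blast
      then show "col_before c i s t" using st by (simp add: bef_def)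
    next
      fix s t j assume st: "s \<in> S" "t \<in> {p}" "j \<in> {1..n}" "inrow Pi j s \<and> inrow Pi j t"
      then have o: "online (Inr j) s" "online (Inr j) p" "s \<noteq> p" by (auto simp: online_def S_def)
      then have "\<not> bef (Inr j) p s" using na by blast
      then have "bef (Inr j) s p" using bef_total[OF o] by blast
      then show "row_before r j s t" using st by (simp add: bef_def)
    qed
  qed
  then show False using indiv by (simp add: M_indivisible_def)
qed

lemma K3: assumes "good x"
  shows "lastp (g x) \<noteq> lastp x" "bef (g x) (lastp x) (lastp (g x))"
proof -
  have l: "islast x (lastp x)" by (rule last_exists[OF assms])
  have l': "islast (g x) (lastp (g x))" by (rule last_exists[OF g_facts(3)[OF assms]])
  obtain y q where yq: "online y (lastp x)" "online y q" "q \<noteq> lastp x" "bef y (lastp x) q"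
    using in_edge[OF online_P[OF g_facts(4)[OF assms]]] by blast
  from online_cases[OF assms yq(1)] have "y = g x"
    using l yq bef_asym unfolding islast_def by blast
  then have ne: "lastp (g x) \<noteq> lastp x" using l' yq bef_asym unfolding islast_def by metis
  then show "lastp (g x) \<noteq> lastp x" .
  show "bef (g x) (lastp x) (lastp (g x))" using l' ne g_facts(1)[OF assms] unfolding islast_def by metis
qed

lemma consist_cell:
  assumes "i \<in> {1..m}" "j \<in> {1..n}" "incell Pi i j a" "incell Pi i j b" "a \<noteq> b"
  shows "col_before c i a b \<longleftrightarrow> row_before r j a b"
proof -
  have ab: "a \<in> P" "b \<in> P" using assms by (auto simp: incell_def incol_def)
  then have d: "fst a \<noteq> fst b" "snd a \<noteq> snd b" using assms(5) injx injy by (auto dest: inj_onD)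
  have "M i j \<noteq> 0" using cells assms by blast
  then have Mcr: "M i j = c i * r j" "c i \<in> {1, -1}" "r j \<in> {1, -1}" using pmm assms(1,2)
    unfolding pmm_witness_def by auto
  have inc: "M i j = 1 \<Longrightarrow> (fst a < fst b \<longleftrightarrow> snd a < snd b)"
    using cells assms(1-4) d by (metis linorder_neqE_nat less_asym)
  have dec: "M i j = -1 \<Longrightarrow> (fst a < fst b \<longleftrightarrow> snd b < snd a)"
    using cells assms(1-4) d by (metis linorder_neqE_nat less_asym)
  show ?thesis using Mcr inc dec d unfolding col_before_def row_before_def by auto
qed

lemma consist:
  assumes "online x a" "online y a" "online x b" "online y b" "isl x \<noteq> isl y" "a \<noteq> b"
  shows "bef x a b \<longleftrightarrow> bef y a b"
  using assms consist_cell unfolding online_def bef_def incell_def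
  by (auto split: sum.splits)

lemma K4: assumes "good x" shows "g (g x) \<noteq> x"
proof
  assume gg: "g (g x) = x"
  have gx: "good (g x)" by (rule g_facts(3)[OF assms])
  have l: "islast x (lastp x)" by (rule last_exists[OF assms])
  have o1: "online x (lastp (g x))" using g_facts(1)[OF gx] gg by simp
  have b1: "bef x (lastp (g x)) (lastp x)" using l o1 K3(1)[OF assms] unfolding islast_def by blast
  have b2: "bef (g x) (lastp x) (lastp (g x))" by (rule K3(2)[OF assms])
  have "bef x (lastp x) (lastp (g x)) \<longleftrightarrow> bef (g x) (lastp x) (lastp (g x))"
    by (rule consist) (use g_facts[OF assms] g_facts[OF gx] gg K3(1)[OF assms] in auto)
  then show False using b1 b2 bef_asym by blast
qed

lemma last_in_cell_unique: "last_in_cell c G i j p \<Longrightarrow> last_in_cell c G i j p' \<Longrightarrow> p = p'"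
  unfolding last_in_cell_def using col_before_asym by blast

lemma cell_of: assumes "good x" "{x, g x} = {Inl i, Inr j}"
  shows "i \<in> {1..m}" "j \<in> {1..n}" "M i j \<noteq> 0" "last_in_cell c Pi i j (lastp x)"
proof -
  have l: "islast x (lastp x)" by (rule last_exists[OF assms(1)])
  have o: "online x (lastp x)" "online (g x) (lastp x)" using g_facts[OF assms(1)] by auto
  have xs: "(x = Inl i \<and> g x = Inr j) \<or> (x = Inr j \<and> g x = Inl i)"
    using assms(2) by (auto simp: doubleton_eq_iff)
  then have oi: "online (Inl i) (lastp x)" "online (Inr j) (lastp x)" using o by auto
  then show ij: "i \<in> {1..m}" "j \<in> {1..n}" by (auto simp: online_def)
  have ic: "incell Pi i j (lastp x)" using oi by (auto simp: online_def incell_def)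
  then show "M i j \<noteq> 0" using cells ij by blast
  show "last_in_cell c Pi i j (lastp x)" unfolding last_in_cell_def
  proof (intro conjI allI impI)
    show "incell Pi i j (lastp x)" by (fact ic)
    fix q assume q: "incell Pi i j q \<and> q \<noteq> lastp x"
    then have oq: "online (Inl i) q" "online (Inr j) q" using ij by (auto simp: online_def incell_def)
    from xs show "col_before c i q (lastp x)"
    proof
      assume "x = Inl i \<and> g x = Inr j"
      then have xi: "x = Inl i" by simp
      have "bef x q (lastp x)" using l oq(1) q xi unfolding islast_def by blast
      then show ?thesis using xi by (simp add: bef_def)
    next
      assume "x = Inr j \<and> g x = Inl i"
      then have xj: "x = Inr j" by simp
      have "bef x q (lastp x)" using l oq(2) q xj unfolding islast_def by blast
      then have "bef (Inr j) q (lastp x)" using xj by simp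
      then have "bef (Inl i) q (lastp x)" using consist[of "Inl i" q "Inr j" "lastp x"] oi oq q by auto
      then show ?thesis by (simp add: bef_def)
    qed
  qed
qed

end

context lctx begin

lemma shape: "good x \<Longrightarrow> \<exists>i j. {x, g x} = {Inl i, Inr j}"
  by (cases x) (auto simp: g_def)

lemma adj_g: assumes "good x" shows "rc_adj M m n x (g x)"
proof -
  obtain i j where e: "{x, g x} = {Inl i, Inr j}" using shape[OF assms] by blast
  have "(x = Inl i \<and> g x = Inr j) \<or> (x = Inr j \<and> g x = Inl i)"
    using e by (auto simp: doubleton_eq_iff)
  then show ?thesis using cell_of[OF assms e] unfolding rc_adj_def by blast
qed

lemma main:
  "\<exists>vs. rc_cycle M m n vs \<and>
           (\<forall>(i, j)\<in>cycle_cells vs. \<exists>p. incell Pi i j p) \<and>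
           M_indivisible M m n c r
             (restr Pi {p. \<exists>(i, j)\<in>cycle_cells vs. last_in_cell c Pi i j p})"
proof -
  obtain p0 where p0: "p0 \<in> P" using card2 by (metis card.empty ex_in_conv not_less_zero)
  obtain i0 where i0: "i0 \<in> {1..m}" "incol Pi i0 p0" using col_exists[OF p0] by blast
  define x0 :: "nat + nat" where "x0 = Inl i0"
  have "online x0 p0" using i0 by (simp add: online_def x0_def)
  then have gx0: "good x0" unfolding good_def by blast
  define L where "L k = (g ^^ k) x0" for k
  have LS: "L (Suc k) = g (L k)" for k by (simp add: L_def)
  have Lgood: "good (L k)" for k
    by (induction k) (auto simp: LS gx0 L_def[of 0] intro: g_facts(3))
  define V where "V = Inl ` {1..m} \<union> Inr ` {1..n}"
  have finV: "finite V" by (simp add: V_def)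
  have LV: "L k \<in> V" for k using Lgood[of k]
    by (cases "L k") (auto simp: good_def online_def V_def)
  have "\<not> inj_on L {0..card V}"
  proof
    assume "inj_on L {0..card V}"
    then have "card {0..card V} \<le> card V" using LV finV by (intro card_inj_on_le) auto
    then show False by simp
  qed
  then obtain a1 b1 where "a1 < b1" "L a1 = L b1"
    unfolding inj_on_def by (metis atLeastAtMost_iff linorder_neqE_nat)
  then have ex: "\<exists>b a. a < b \<and> L a = L b" by blast
  define b0 where "b0 = (LEAST b. \<exists>a. a < b \<and> L a = L b)"
  have "\<exists>a. a < b0 \<and> L a = L b0" unfolding b0_def using LeastI_ex[OF ex] .
  then obtain a where ab: "a < b0" "L a = L b0" by blast
  have inj: "L k1 \<noteq> L k2" if "a \<le> k1" "k1 < k2" "k2 < b0" for k1 k2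
  proof
    assume "L k1 = L k2"
    then have "b0 \<le> k2" unfolding b0_def using that by (intro Least_le) blast
    then show False using that by simp
  qed
  define t where "t = b0 - a"
  have t0: "t > 0" using ab by (simp add: t_def)
  have Ladd: "L (k + d) = (g ^^ d) (L k)" for k d
    by (simp add: L_def funpow_add add.commute)
  have per: "L (k + t) = L k" if "a \<le> k" for k
  proof -
    have e: "k + t = b0 + (k - a)" unfolding t_def using that ab by arith
    have "L (k + t) = L (b0 + (k - a))" by (simp only: e)
    also have "\<dots> = (g ^^ (k - a)) (L b0)" by (rule Ladd)
    also have "\<dots> = (g ^^ (k - a)) (L a)" using ab by simp
    also have "\<dots> = L (a + (k - a))" by (rule Ladd[symmetric])
    finally show ?thesis using that by simp
  qed
  have perN: "L (k + t * N) = L k" if "a \<le> k" for k N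
  proof (induction N)
    case 0 then show ?case by simp
  next
    case (Suc N)
    have "L (k + t * Suc N) = L ((k + t * N) + t)" by (simp add: algebra_simps)
    also have "\<dots> = L (k + t * N)" using that by (intro per) simp
    finally show ?case using Suc by simp
  qed
  have modred: "L k = L (a + (k - a) mod t)" if "a \<le> k" for k
  proof -
    have "k = (a + (k - a) mod t) + t * ((k - a) div t)" using that by simp
    then have "L k = L ((a + (k - a) mod t) + t * ((k - a) div t))" by simp
    also have "\<dots> = L (a + (k - a) mod t)" by (rule perN) simp
    finally show ?thesis .
  qed
  have t1: "t \<noteq> 1"
  proof
    assume "t = 1"
    then have "L (Suc a) = L a" using per[of a] by simp
    then show False using g_facts(2)[OF Lgood[of a]] by (simp add: LS)
  qed
  have t2: "t \<noteq> 2"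
  proof
    assume "t = 2"
    then have "L (Suc (Suc a)) = L a" using per[of a] by simp
    then show False using K4[OF Lgood[of a]] by (simp add: LS)
  qed
  have t3: "t \<ge> 3" using t0 t1 t2 by linarith
  define vs where "vs = map (\<lambda>k. L (a + k)) [0..<t]"
  have lvs: "length vs = t" by (simp add: vs_def)
  have vsk: "vs ! k = L (a + k) \<and> vs ! ((k + 1) mod t) = g (L (a + k))" if "k < t" for k
  proof -
    have "vs ! ((k + 1) mod t) = L (a + (k + 1) mod t)" using t0 by (simp add: vs_def)
    also have "\<dots> = L (a + k + 1)" using modred[of "a + k + 1"] by simp
    finally show ?thesis using that by (simp add: vs_def LS)
  qed
  have cyc: "rc_cycle M m n vs"
    unfolding rc_cycle_def lvs
  proof (intro conjI allI impI)
    show "3 \<le> t" by (fact t3)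
    show "distinct vs" unfolding vs_def distinct_map
    proof
      show "inj_on (\<lambda>k. L (a + k)) (set [0..<t])"
        unfolding inj_on_def
      proof (intro ballI impI; rule ccontr)
        fix k1 k2 assume k: "k1 \<in> set [0..<t]" "k2 \<in> set [0..<t]" "L (a + k1) = L (a + k2)" "k1 \<noteq> k2"
        then consider "k1 < k2" | "k2 < k1" by linarith
        then show False
        proof cases
          case 1 then show ?thesis using inj[of "a + k1" "a + k2"] k by (simp add: t_def; linarith)
        next
          case 2 then show ?thesis using inj[of "a + k2" "a + k1"] k by (simp add: t_def; linarith)
        qed
      qed
    qed simp
    fix k assume "k < t"
    then show "rc_adj M m n (vs ! k) (vs ! ((k + 1) mod t))"
      using vsk[of k] adj_g[OF Lgood] by simp
  qed
  have ccE: "\<exists>k<t. {L (a + k), g (L (a + k))} = {Inl i, Inr j}" if "(i, j) \<in> cycle_cells vs" for i j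
  proof -
    have "\<exists>k<length vs. {vs ! k, vs ! ((k + 1) mod length vs)} = {Inl i, Inr j}"
      using that unfolding cycle_cells_def by (simp only: mem_Collect_eq case_prod_conv)
    then obtain k where k: "k < length vs" "{vs ! k, vs ! ((k + 1) mod length vs)} = {Inl i, Inr j}"
      by (elim exE conjE) (rule that)
    have "k < t" using k(1) lvs by simp
    moreover have e1: "vs ! k = L (a + k)" "vs ! ((k + 1) mod length vs) = g (L (a + k))"
      using vsk[OF \<open>k < t\<close>] lvs by simp_all
    moreover have "{L (a + k), g (L (a + k))} = {Inl i, Inr j}" using k(2) by (simp only: e1)
    ultimately show ?thesis by blast
  qed
  have nonempty: "\<forall>(i, j)\<in>cycle_cells vs. \<exists>p. incell Pi i j p"
  proof (clarify)
    fix i j assume "(i, j) \<in> cycle_cells vs"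
    then obtain k where "{L (a + k), g (L (a + k))} = {Inl i, Inr j}" using ccE by blast
    then have "last_in_cell c Pi i j (lastp (L (a + k)))" by (rule cell_of(4)[OF Lgood])
    then show "\<exists>p. incell Pi i j p" unfolding last_in_cell_def by blast
  qed
  define X where "X = {p. \<exists>(i, j)\<in>cycle_cells vs. last_in_cell c Pi i j p}"
  have Xl: "lastp (L k) \<in> X" if "a \<le> k" for k
  proof -
    define k' where "k' = (k - a) mod t"
    have k': "k' < t" "L k = L (a + k')" using t0 modred[OF that] by (auto simp: k'_def)
    obtain i j where e: "{L (a + k'), g (L (a + k'))} = {Inl i, Inr j}" using shape[OF Lgood] by blast
    have e1: "vs ! k' = L (a + k')" "vs ! ((k' + 1) mod length vs) = g (L (a + k'))"
      using vsk[OF k'(1)] lvs by simp_all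
    have "{vs ! k', vs ! ((k' + 1) mod length vs)} = {Inl i, Inr j}" using e by (simp only: e1)
    then have "\<exists>k<length vs. {vs ! k, vs ! ((k + 1) mod length vs)} = {Inl i, Inr j}"
      using k'(1) lvs by auto
    then have "(i, j) \<in> cycle_cells vs" unfolding cycle_cells_def by (simp only: mem_Collect_eq case_prod_conv)
    then show ?thesis unfolding X_def using cell_of(4)[OF Lgood e] k' by auto
  qed
  have Xr: "\<exists>k\<ge>a. p = lastp (L k)" if pX: "p \<in> X" for p
  proof -
    obtain i j where ij: "(i, j) \<in> cycle_cells vs" "last_in_cell c Pi i j p" using pX unfolding X_def by blast
    then obtain k where "{L (a + k), g (L (a + k))} = {Inl i, Inr j}" using ccE by blast
    then have "last_in_cell c Pi i j (lastp (L (a + k)))" using cell_of(4)[OF Lgood] by blast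
    then show ?thesis using ij(2) last_in_cell_unique by (intro exI[of _ "a + k"]) auto
  qed
  have LP: "lastp (L k) \<in> P" for k using g_facts(4)[OF Lgood] online_P by blast
  have indiv': "M_indivisible M m n c r (restr Pi X)"
    unfolding M_indivisible_def
  proof
    assume "M_divisible M m n c r (restr Pi X)"
    then obtain Sg Tg where ne: "gpts Sg \<noteq> {}" "gpts Tg \<noteq> {}"
      and ms: "is_Msum m n c r (restr Pi X) Sg Tg"
      unfolding M_divisible_def by blast
    from ms obtain S T where
      ST0: "S \<union> T = gpts (restr Pi X)" and ST: "S \<inter> T = {}" and
      iso1: "gp_iso m n (restr (restr Pi X) S) Sg" and iso2: "gp_iso m n (restr (restr Pi X) T) Tg" and
      cond: "\<forall>s\<in>S. \<forall>t\<in>T.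
           (\<forall>i\<in>{1..m}. incol (restr Pi X) i s \<and> incol (restr Pi X) i t \<longrightarrow> col_before c i s t) \<and>
           (\<forall>j\<in>{1..n}. inrow (restr Pi X) j s \<and> inrow (restr Pi X) j t \<longrightarrow> row_before r j s t)"
      unfolding is_Msum_def by (elim exE conjE) (rule that)
    have isos: "gp_iso m n (restr (restr Pi X) S) Sg" "gp_iso m n (restr (restr Pi X) T) Tg"
      by (fact iso1) (fact iso2)
    have ST: "S \<union> T = P \<inter> X" "S \<inter> T = {}" using ST0 ST by (simp_all add: gpts_restr)
    have "S \<noteq> {}"
    proof
      assume "S = {}"
      then have "gpts (restr (restr Pi X) S) = {}" by (simp add: gpts_restr)
      then show False using isos(1) ne(1) unfolding gp_iso_def bij_betw_def by auto
    qed
    then obtain s0 where s0: "s0 \<in> S" by blast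
    have "T \<noteq> {}"
    proof
      assume "T = {}"
      then have "gpts (restr (restr Pi X) T) = {}" by (simp add: gpts_restr)
      then show False using isos(2) ne(2) unfolding gp_iso_def bij_betw_def by auto
    qed
    then obtain t0 where t0': "t0 \<in> T" by blast
    have bst: "bef y s t" if "s \<in> S" "t \<in> T" "online y s" "online y t" for y s t
    proof -
      have "s \<in> X" "t \<in> X" using that ST by auto
      then show ?thesis using that cond
        by (cases y) (auto simp: bef_def online_def incol_restr inrow_restr)
    qed
    have step: "lastp (L (Suc k)) \<in> T" if "a \<le> k" "lastp (L k) \<in> T" for k
    proof (rule ccontr)
      assume nt: "lastp (L (Suc k)) \<notin> T"
      have "lastp (L (Suc k)) \<in> S" using nt ST Xl[of "Suc k"] LP[of "Suc k"] that by auto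
      then have "bef (g (L k)) (lastp (L (Suc k))) (lastp (L k))"
        using bst[of _ _ "g (L k)"] that g_facts(1)[OF Lgood[of k]] g_facts(4)[OF Lgood[of "Suc k"]]
        by (simp add: LS)
      then show False using K3(2)[OF Lgood[of k]] bef_asym by (simp add: LS)
    qed
    obtain e where e: "e \<ge> a" "t0 = lastp (L e)" using Xr[of t0] t0' ST by blast
    have allT: "lastp (L (e + d)) \<in> T" for d
      by (induction d) (use e t0' step in auto)
    obtain f where f: "f \<ge> a" "s0 = lastp (L f)" using Xr[of s0] s0 ST by blast
    have "L (f + t * e) = L f" using perN f by blast
    moreover have "e \<le> t * e" using t0 by simp
    then have "f + t * e = e + (f + t * e - e)" by arith
    ultimately have "s0 \<in> T" using allT[of "f + t * e - e"] f by metis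
    then show False using s0 ST by blast
  qed
  show ?thesis using cyc nonempty indiv' unfolding X_def by blast
qed

end

theorem lemma3p7:
  fixes M :: "nat \<Rightarrow> nat \<Rightarrow> int" and m n :: nat and c r :: "nat \<Rightarrow> int" and Pi :: gperm
  assumes "gridding_matrix M m n"
    and "pmm_witness M m n c r"
    and "gridded M m n Pi"
    and "M_indivisible M m n c r Pi"
    and "card (gpts Pi) > 1"
  shows "\<exists>vs. rc_cycle M m n vs \<and>
           (\<forall>(i, j)\<in>cycle_cells vs. \<exists>p. incell Pi i j p) \<and>
           M_indivisible M m n c r
             (restr Pi {p. \<exists>(i, j)\<in>cycle_cells vs. last_in_cell c Pi i j p})"
proof -
  interpret lctx M m n c r Pi using assms(2-5) by unfold_locales
  show ?thesis by (rule main)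
qed

end
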